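(* Let $\Omega\subset\mathbb{R}^d$, let $\Psi_K,\Phi_K$ be stationary, positive definite kernels, integrable on $\mathbb{R}^d$, and set $\Psi_G=\Psi_K$, $\Phi_G=\Phi_K$. Let $X=\{x_1,\dots,x_n\}\subset\Omega$ be a fixed design and let $\epsilon_1,\dots,\epsilon_n$ be i.i.d. with mean zero and variance $\sigma_\epsilon^2$. Let $f\in\mathcal{N}_{\Psi_K}(\Omega)$ be deterministic with data $y_k=f(x_k)+\epsilon_k$, and let $\hat f_m$ be the kernel ridge regression estimator $$\hat f_m=\operatorname*{argmin}_{g\in\mathcal{N}_{\Phi_K}(\Omega)}\Big(\frac1n\sum_{k=1}^n(y_k-g(x_k))^2+\lambda_m\|g\|_{\mathcal{N}_{\Phi_K}(\Omega)}^2\Big).$$ Let $Z\sim GP(0,\Psi_G)$ (zero mean, covariance $\Psi_G(x-x')$), independent of the noise, with data $y'_k=Z(x_k)+\epsilon_k$, and let $\hat f_G(x)=r_m(x)^T(R_m+\mu_mI_n)^{-1}Y'$, where $r_m(x)=(\Phi_G(x-x_j))_j$, $R_m=(\Phi_G(x_j-x_k))_{jk}$, $Y'=(y'_k)_k$. Suppose $\lambda_m=\mu_m/n$. Then $$\mathbb{E}(f(x)-\hat f_m(x))^2\le C\,\mathbb{E}(Z(x)-\hat f_G(x))^2\quad\forall x\in\Omega,$$ where $C=\max(1,\|f\|_{\mathcal{N}_{\Psi_K}(\Omega)}^2)$.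
   Context: For a stationary positive definite kernel $K$, $\mathcal{N}_K(\Omega)$ denotes the reproducing kernel Hilbert space on $\Omega$: the closure of finite sums $\sum_k\beta_kK(\cdot-x_k)$, $x_k\in\Omega$, under the inner product $\langle\sum_k\beta_kK(\cdot-x_k),\sum_j\gamma_jK(\cdot-x'_j)\rangle=\sum_{k,j}\beta_k\gamma_jK(x_k-x'_j)$. *)

theory Defs
  imports "HOL-Analysis.Analysis" "HOL-Probability.Probability"
begin

text \<open>Finitely supported coefficient functions with centres in \<Omega>; they encode the
  finite sums \<open>\<Sum>_k \<beta>_k K(\<cdot> - x_k)\<close>.\<close>
definition fin_coeffs :: "'a set \<Rightarrow> ('a \<Rightarrow> real) \<Rightarrow> bool" where
  "fin_coeffs \<Omega> c \<longleftrightarrow> finite {y. c y \<noteq> 0} \<and> {y. c y \<noteq> 0} \<subseteq> \<Omega>"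

definition kfun :: "('a::ab_group_add \<Rightarrow> real) \<Rightarrow> ('a \<Rightarrow> real) \<Rightarrow> 'a \<Rightarrow> real" where
  "kfun K c x = (\<Sum>y\<in>{y. c y \<noteq> 0}. c y * K (x - y))"

definition kip :: "('a::ab_group_add \<Rightarrow> real) \<Rightarrow> ('a \<Rightarrow> real) \<Rightarrow> ('a \<Rightarrow> real) \<Rightarrow> real" where
  "kip K c d = (\<Sum>y\<in>{y. c y \<noteq> 0}. \<Sum>z\<in>{z. d z \<noteq> 0}. c y * d z * K (y - z))"

definition stationary_pd_kernel :: "('a::ab_group_add \<Rightarrow> real) \<Rightarrow> bool" where
  "stationary_pd_kernel K \<longleftrightarrow> (\<forall>x. K (- x) = K x) \<and>
     (\<forall>c. finite {y. c y \<noteq> 0} \<and> (\<exists>y. c y \<noteq> 0) \<longrightarrow> kip K c c > 0)"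

text \<open>A sequence of finite sums which is Cauchy in the native norm and converges
  pointwise on \<Omega> to f (realising f as an element of the completion).\<close>
definition native_approx :: "('a::ab_group_add \<Rightarrow> real) \<Rightarrow> 'a set \<Rightarrow> (nat \<Rightarrow> 'a \<Rightarrow> real) \<Rightarrow> ('a \<Rightarrow> real) \<Rightarrow> bool" where
  "native_approx K \<Omega> c f \<longleftrightarrow> (\<forall>j. fin_coeffs \<Omega> (c j)) \<and>
     (\<forall>e>0. \<exists>N. \<forall>i\<ge>N. \<forall>j\<ge>N. kip K (\<lambda>y. c i y - c j y) (\<lambda>y. c i y - c j y) < e) \<and>
     (\<forall>x\<in>\<Omega>. (\<lambda>j. kfun K (c j) x) \<longlonglongrightarrow> f x)"

definition native_space :: "('a::ab_group_add \<Rightarrow> real) \<Rightarrow> 'a set \<Rightarrow> ('a \<Rightarrow> real) set" where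
  "native_space K \<Omega> = {f. \<exists>c. native_approx K \<Omega> c f}"

definition native_norm :: "('a::ab_group_add \<Rightarrow> real) \<Rightarrow> 'a set \<Rightarrow> ('a \<Rightarrow> real) \<Rightarrow> real" where
  "native_norm K \<Omega> f = (THE r. \<exists>c. native_approx K \<Omega> c f \<and>
      (\<lambda>j. sqrt (kip K (c j) (c j))) \<longlonglongrightarrow> r)"

definition krr_obj :: "('a::ab_group_add \<Rightarrow> real) \<Rightarrow> 'a set \<Rightarrow> ('n::finite \<Rightarrow> 'a) \<Rightarrow> ('n \<Rightarrow> real) \<Rightarrow> real \<Rightarrow> ('a \<Rightarrow> real) \<Rightarrow> real" where
  "krr_obj \<Phi> \<Omega> X y lam g =
     (1 / real CARD('n)) * (\<Sum>k\<in>UNIV. (y k - g (X k))^2) + lam * (native_norm \<Phi> \<Omega> g)^2"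

definition krr :: "('a::ab_group_add \<Rightarrow> real) \<Rightarrow> 'a set \<Rightarrow> ('n::finite \<Rightarrow> 'a) \<Rightarrow> ('n \<Rightarrow> real) \<Rightarrow> real \<Rightarrow> ('a \<Rightarrow> real)" where
  "krr \<Phi> \<Omega> X y lam = (SOME g. g \<in> native_space \<Phi> \<Omega> \<and>
      (\<forall>h\<in>native_space \<Phi> \<Omega>. krr_obj \<Phi> \<Omega> X y lam g \<le> krr_obj \<Phi> \<Omega> X y lam h))"

definition centered_gp :: "'w measure \<Rightarrow> 'a set \<Rightarrow> ('a::ab_group_add \<Rightarrow> real) \<Rightarrow> ('a \<Rightarrow> 'w \<Rightarrow> real) \<Rightarrow> bool" where
  "centered_gp M \<Omega> \<Psi> Z \<longleftrightarrow> (\<forall>c. fin_coeffs \<Omega> c \<and> (\<exists>y. c y \<noteq> 0) \<longrightarrow>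
     distributed M lborel (\<lambda>\<omega>. \<Sum>y\<in>{y. c y \<noteq> 0}. c y * Z y \<omega>)
        (normal_density 0 (sqrt (kip \<Psi> c c))))"

definition gp_pred :: "('a::ab_group_add \<Rightarrow> real) \<Rightarrow> ('n::finite \<Rightarrow> 'a) \<Rightarrow> real \<Rightarrow> real^'n \<Rightarrow> 'a \<Rightarrow> real" where
  "gp_pred \<Phi> X \<mu> Y x =
     (\<chi> j. \<Phi> (x - X j)) \<bullet> (matrix_inv ((\<chi> j k. \<Phi> (X j - X k)) + \<mu> *\<^sub>R mat 1) *v Y)"

end

theory Submission
  imports Defs
begin

lemma sum_supp_superset:
  fixes c g :: "'a \<Rightarrow> real"
  assumes "finite S" "{y. c y \<noteq> 0} \<subseteq> S"
  shows "(\<Sum>y\<in>{y. c y \<noteq> 0}. c y * g y) = (\<Sum>y\<in>S. c y * g y)"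
  by (rule sum.mono_neutral_left) (use assms in auto)

lemma kfun_superset:
  assumes "finite S" "{y. c y \<noteq> 0} \<subseteq> S"
  shows "kfun K c x = (\<Sum>y\<in>S. c y * K (x - y))"
  unfolding kfun_def by (rule sum_supp_superset[OF assms])

lemma kip_kfun: "kip K c d = (\<Sum>y\<in>{y. c y \<noteq> 0}. c y * kfun K d y)"
  unfolding kip_def kfun_def by (simp add: sum_distrib_left mult.assoc)

lemma kip_superset:
  assumes "finite S" "{y. c y \<noteq> 0} \<subseteq> S"
  shows "kip K c d = (\<Sum>y\<in>S. c y * kfun K d y)"
  unfolding kip_kfun by (rule sum_supp_superset[OF assms])

lemma fin_lin:
  fixes c d :: "'a \<Rightarrow> real"
  assumes "finite {y. c y \<noteq> 0}" "finite {y. d y \<noteq> 0}"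
  shows "finite {y. s * c y + t * d y \<noteq> 0}"
  by (rule finite_subset[of _ "{y. c y \<noteq> 0} \<union> {y. d y \<noteq> 0}"]) (use assms in auto)

lemma fin_diff:
  fixes c d :: "'a \<Rightarrow> real"
  assumes "finite {y. c y \<noteq> 0}" "finite {y. d y \<noteq> 0}"
  shows "finite {y. c y - d y \<noteq> 0}"
  by (rule finite_subset[of _ "{y. c y \<noteq> 0} \<union> {y. d y \<noteq> 0}"]) (use assms in auto)

lemma fin_add:
  fixes c d :: "'a \<Rightarrow> real"
  assumes "finite {y. c y \<noteq> 0}" "finite {y. d y \<noteq> 0}"
  shows "finite {y. c y + d y \<noteq> 0}"
  by (rule finite_subset[of _ "{y. c y \<noteq> 0} \<union> {y. d y \<noteq> 0}"]) (use assms in auto)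

lemma kfun_lin:
  assumes "finite {y. c y \<noteq> 0}" "finite {y. d y \<noteq> 0}"
  shows "kfun K (\<lambda>y. s * c y + t * d y) x = s * kfun K c x + t * kfun K d x"
proof -
  let ?S = "{y. c y \<noteq> 0} \<union> {y. d y \<noteq> 0}"
  have f: "finite ?S" using assms by auto
  have "kfun K (\<lambda>y. s * c y + t * d y) x = (\<Sum>y\<in>?S. (s * c y + t * d y) * K (x - y))"
    by (rule kfun_superset[OF f]) auto
  also have "\<dots> = s * (\<Sum>y\<in>?S. c y * K (x - y)) + t * (\<Sum>y\<in>?S. d y * K (x - y))"
    by (simp add: sum.distrib sum_distrib_left algebra_simps)
  also have "\<dots> = s * kfun K c x + t * kfun K d x"
    using kfun_superset[OF f, of c] kfun_superset[OF f, of d] by auto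
  finally show ?thesis .
qed

lemma kip_lin_left:
  assumes "finite {y. c y \<noteq> 0}" "finite {y. d y \<noteq> 0}"
  shows "kip K (\<lambda>y. s * c y + t * d y) e = s * kip K c e + t * kip K d e"
proof -
  let ?S = "{y. c y \<noteq> 0} \<union> {y. d y \<noteq> 0}"
  have f: "finite ?S" using assms by auto
  have "kip K (\<lambda>y. s * c y + t * d y) e = (\<Sum>y\<in>?S. (s * c y + t * d y) * kfun K e y)"
    by (rule kip_superset[OF f]) auto
  also have "\<dots> = s * (\<Sum>y\<in>?S. c y * kfun K e y) + t * (\<Sum>y\<in>?S. d y * kfun K e y)"
    by (simp add: sum.distrib sum_distrib_left algebra_simps)
  also have "\<dots> = s * kip K c e + t * kip K d e"
    using kip_superset[OF f, of c] kip_superset[OF f, of d] by auto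
  finally show ?thesis .
qed

lemma kip_lin_right:
  assumes "finite {y. d y \<noteq> 0}" "finite {y. e y \<noteq> 0}"
  shows "kip K c (\<lambda>y. s * d y + t * e y) = s * kip K c d + t * kip K c e"
  unfolding kip_kfun kfun_lin[OF assms]
  by (simp add: sum.distrib sum_distrib_left algebra_simps)

lemma kfun_diff:
  assumes "finite {y. c y \<noteq> 0}" "finite {y. d y \<noteq> 0}"
  shows "kfun K (\<lambda>y. c y - d y) x = kfun K c x - kfun K d x"
  using kfun_lin[OF assms, of K 1 "-1" x] by simp

lemma kfun_add:
  assumes "finite {y. c y \<noteq> 0}" "finite {y. d y \<noteq> 0}"
  shows "kfun K (\<lambda>y. c y + d y) x = kfun K c x + kfun K d x"
  using kfun_lin[OF assms, of K 1 1 x] by simp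

lemma kip_diff_left:
  assumes "finite {y. c y \<noteq> 0}" "finite {y. d y \<noteq> 0}"
  shows "kip K (\<lambda>y. c y - d y) e = kip K c e - kip K d e"
  using kip_lin_left[OF assms, of K 1 "-1" e] by simp

lemma kip_add_left:
  assumes "finite {y. c y \<noteq> 0}" "finite {y. d y \<noteq> 0}"
  shows "kip K (\<lambda>y. c y + d y) e = kip K c e + kip K d e"
  using kip_lin_left[OF assms, of K 1 1 e] by simp

lemma kip_diff_right:
  assumes "finite {y. d y \<noteq> 0}" "finite {y. e y \<noteq> 0}"
  shows "kip K c (\<lambda>y. d y - e y) = kip K c d - kip K c e"
  using kip_lin_right[OF assms, of K c 1 "-1"] by simp

lemma kip_add_right:
  assumes "finite {y. d y \<noteq> 0}" "finite {y. e y \<noteq> 0}"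
  shows "kip K c (\<lambda>y. d y + e y) = kip K c d + kip K c e"
  using kip_lin_right[OF assms, of K c 1 1] by simp

lemma kip_sym:
  assumes "\<forall>x. K (- x) = K x"
  shows "kip K c d = kip K d c"
proof -
  have "kip K c d = (\<Sum>z\<in>{z. d z \<noteq> 0}. \<Sum>y\<in>{y. c y \<noteq> 0}. c y * d z * K (y - z))"
    unfolding kip_def by (rule sum.swap)
  also have "\<dots> = kip K d c"
    unfolding kip_def
  proof (intro sum.cong refl)
    fix z y
    have "K (y - z) = K (z - y)" using assms[rule_format, of "z - y"] by simp
    then show "c y * d z * K (y - z) = d z * c y * K (z - y)" by simp
  qed
  finally show ?thesis .
qed

lemma kip_zero_left: "kip K (\<lambda>y. 0) d = 0"
  unfolding kip_def by simp

lemma kip_nonneg: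
  assumes "stationary_pd_kernel K" "finite {y. c y \<noteq> 0}"
  shows "0 \<le> kip K c c"
proof (cases "\<exists>y. c y \<noteq> 0")
  case True
  then show ?thesis using assms unfolding stationary_pd_kernel_def by (auto intro: less_imp_le)
next
  case False
  then have "c = (\<lambda>y. 0)" by auto
  then show ?thesis by (simp add: kip_zero_left)
qed

lemma quad_disc:
  fixes a b q :: real
  assumes "0 \<le> a" "0 \<le> q" "\<And>t. 0 \<le> a + 2 * t * b + t^2 * q"
  shows "b^2 \<le> a * q"
proof (cases "q = 0")
  case True
  show ?thesis
  proof (rule ccontr)
    assume "\<not> ?thesis"
    then have "b \<noteq> 0" using True by auto
    have "0 \<le> a + 2 * (-(a+1)/(2*b)) * b + (-(a+1)/(2*b))^2 * q" by (rule assms(3))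
    with True \<open>b \<noteq> 0\<close> show False by (simp add: field_simps)
  qed
next
  case False
  then have q: "q > 0" using assms by auto
  have "0 \<le> a + 2 * (-b/q) * b + (-b/q)^2 * q" by (rule assms(3))
  then have "0 \<le> a - b^2 / q" using q by (simp add: field_simps power2_eq_square)
  then show ?thesis using q by (simp add: field_simps)
qed

lemma kip_cs:
  assumes K: "stationary_pd_kernel K" and c: "finite {y. c y \<noteq> 0}" and d: "finite {y. d y \<noteq> 0}"
  shows "(kip K c d)^2 \<le> kip K c c * kip K d d"
proof (rule quad_disc)
  show "0 \<le> kip K c c" "0 \<le> kip K d d" using kip_nonneg K c d by auto
  fix t
  have sym: "kip K d c = kip K c d" using K kip_sym unfolding stationary_pd_kernel_def by metis
  have f: "finite {y. 1 * c y + t * d y \<noteq> 0}" by (rule fin_lin[OF c d])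
  have "0 \<le> kip K (\<lambda>y. 1 * c y + t * d y) (\<lambda>y. 1 * c y + t * d y)"
    by (rule kip_nonneg[OF K f])
  also have "\<dots> = kip K c c + 2 * t * kip K c d + t^2 * kip K d d"
    unfolding kip_lin_left[OF c d] kip_lin_right[OF c d] sym
    by (simp add: algebra_simps power2_eq_square)
  finally show "0 \<le> kip K c c + 2 * t * kip K c d + t^2 * kip K d d" .
qed

lemma kip_abs_le:
  assumes K: "stationary_pd_kernel K" and c: "finite {y. c y \<noteq> 0}" and d: "finite {y. d y \<noteq> 0}"
  shows "\<bar>kip K c d\<bar> \<le> sqrt (kip K c c) * sqrt (kip K d d)"
proof -
  have "\<bar>kip K c d\<bar> = sqrt ((kip K c d)^2)" by simp
  also have "\<dots> \<le> sqrt (kip K c c * kip K d d)" using kip_cs[OF assms] by (rule real_sqrt_le_mono)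
  finally show ?thesis by (simp add: real_sqrt_mult)
qed

definition qcauchy :: "('a::ab_group_add \<Rightarrow> real) \<Rightarrow> (nat \<Rightarrow> 'a \<Rightarrow> real) \<Rightarrow> bool" where
  "qcauchy K c \<longleftrightarrow> (\<forall>e>0. \<exists>N. \<forall>i\<ge>N. \<forall>j\<ge>N. kip K (\<lambda>y. c i y - c j y) (\<lambda>y. c i y - c j y) < e)"

lemma kip_sym_pd: "stationary_pd_kernel K \<Longrightarrow> kip K c d = kip K d c"
  using kip_sym unfolding stationary_pd_kernel_def by metis

lemma qn_tri_add:
  assumes K: "stationary_pd_kernel K" and a: "finite {y. a y \<noteq> 0}" and b: "finite {y. b y \<noteq> 0}"
  shows "sqrt (kip K (\<lambda>y. a y + b y) (\<lambda>y. a y + b y)) \<le> sqrt (kip K a a) + sqrt (kip K b b)"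
proof -
  have "kip K (\<lambda>y. a y + b y) (\<lambda>y. a y + b y) = kip K a a + 2 * kip K a b + kip K b b"
    unfolding kip_add_left[OF a b] kip_add_right[OF a b] using kip_sym_pd[OF K, of b a] by simp
  also have "\<dots> \<le> kip K a a + 2 * (sqrt (kip K a a) * sqrt (kip K b b)) + kip K b b"
    using kip_abs_le[OF K a b] by simp
  also have "\<dots> = (sqrt (kip K a a) + sqrt (kip K b b))^2"
    using kip_nonneg[OF K a] kip_nonneg[OF K b] by (simp add: power2_eq_square algebra_simps)
  finally show ?thesis
    using kip_nonneg[OF K a] kip_nonneg[OF K b] real_sqrt_le_mono by fastforce
qed

lemma qn_tri_diff:
  assumes K: "stationary_pd_kernel K" and a: "finite {y. a y \<noteq> 0}" and b: "finite {y. b y \<noteq> 0}"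
  shows "sqrt (kip K (\<lambda>y. a y - b y) (\<lambda>y. a y - b y)) \<le> sqrt (kip K a a) + sqrt (kip K b b)"
proof -
  have "kip K (\<lambda>y. a y - b y) (\<lambda>y. a y - b y) = kip K a a - 2 * kip K a b + kip K b b"
    unfolding kip_diff_left[OF a b] kip_diff_right[OF a b] using kip_sym_pd[OF K, of b a] by simp
  also have "\<dots> \<le> kip K a a + 2 * (sqrt (kip K a a) * sqrt (kip K b b)) + kip K b b"
    using kip_abs_le[OF K a b] by simp
  also have "\<dots> = (sqrt (kip K a a) + sqrt (kip K b b))^2"
    using kip_nonneg[OF K a] kip_nonneg[OF K b] by (simp add: power2_eq_square algebra_simps)
  finally show ?thesis
    using kip_nonneg[OF K a] kip_nonneg[OF K b] real_sqrt_le_mono by fastforce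
qed

lemma qn_diff_le:
  assumes K: "stationary_pd_kernel K" and c: "finite {y. c y \<noteq> 0}" and d: "finite {y. d y \<noteq> 0}"
  shows "\<bar>sqrt (kip K c c) - sqrt (kip K d d)\<bar> \<le> sqrt (kip K (\<lambda>y. c y - d y) (\<lambda>y. c y - d y))"
proof -
  have e: "finite {y. c y - d y \<noteq> 0}" by (rule fin_diff[OF c d])
  have 1: "sqrt (kip K c c) \<le> sqrt (kip K d d) + sqrt (kip K (\<lambda>y. c y - d y) (\<lambda>y. c y - d y))"
    using qn_tri_add[OF K d e] by simp
  have 2: "sqrt (kip K d d) \<le> sqrt (kip K c c) + sqrt (kip K (\<lambda>y. c y - d y) (\<lambda>y. c y - d y))"
    using qn_tri_diff[OF K c e] by simp
  show ?thesis using 1 2 by linarith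
qed

lemma q_diff_le2:
  assumes K: "stationary_pd_kernel K" and a: "finite {y. a y \<noteq> 0}" and b: "finite {y. b y \<noteq> 0}"
  shows "kip K (\<lambda>y. a y - b y) (\<lambda>y. a y - b y) \<le> 2 * kip K a a + 2 * kip K b b"
proof -
  have "kip K (\<lambda>y. a y - b y) (\<lambda>y. a y - b y) = kip K a a - 2 * kip K a b + kip K b b"
    unfolding kip_diff_left[OF a b] kip_diff_right[OF a b] using kip_sym_pd[OF K, of b a] by simp
  also have "\<dots> \<le> kip K a a + 2 * (sqrt (kip K a a) * sqrt (kip K b b)) + kip K b b"
    using kip_abs_le[OF K a b] by simp
  also have "\<dots> \<le> 2 * kip K a a + 2 * kip K b b"
  proof -
    have "0 \<le> (sqrt (kip K a a) - sqrt (kip K b b))^2" by simp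
    then show ?thesis
      using kip_nonneg[OF K a] kip_nonneg[OF K b] by (simp add: power2_eq_square algebra_simps)
  qed
  finally show ?thesis .
qed

lemma qcauchy_conv:
  assumes K: "stationary_pd_kernel K" and fin: "\<And>j. finite {y. c j y \<noteq> 0}" and q: "qcauchy K c"
  shows "convergent (\<lambda>j. sqrt (kip K (c j) (c j)))"
proof -
  have "Cauchy (\<lambda>j. sqrt (kip K (c j) (c j)))"
  proof (rule metric_CauchyI)
    fix e :: real assume "0 < e"
    then obtain N where N: "\<forall>i\<ge>N. \<forall>j\<ge>N. kip K (\<lambda>y. c i y - c j y) (\<lambda>y. c i y - c j y) < e^2"
      using q unfolding qcauchy_def by (meson zero_less_power)
    show "\<exists>M. \<forall>m\<ge>M. \<forall>n\<ge>M. dist (sqrt (kip K (c m) (c m))) (sqrt (kip K (c n) (c n))) < e"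
    proof (intro exI allI impI)
      fix m n assume "N \<le> m" "N \<le> n"
      then have "sqrt (kip K (\<lambda>y. c m y - c n y) (\<lambda>y. c m y - c n y)) < sqrt (e^2)"
        using N real_sqrt_less_mono by blast
      then have "sqrt (kip K (\<lambda>y. c m y - c n y) (\<lambda>y. c m y - c n y)) < e" using \<open>0 < e\<close> by simp
      then show "dist (sqrt (kip K (c m) (c m))) (sqrt (kip K (c n) (c n))) < e"
        using qn_diff_le[OF K fin fin, of m n] by (simp add: dist_real_def)
    qed
  qed
  then show ?thesis by (simp add: Cauchy_convergent_iff)
qed

lemma qcauchy_diff:
  assumes K: "stationary_pd_kernel K" and fin: "\<And>j. finite {y. c j y \<noteq> 0}" "\<And>j. finite {y. d j y \<noteq> 0}"
    and q: "qcauchy K c" "qcauchy K d"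
  shows "qcauchy K (\<lambda>j y. c j y - d j y)"
  unfolding qcauchy_def
proof (intro allI impI)
  fix e :: real assume "0 < e"
  obtain N1 where N1: "\<forall>i\<ge>N1. \<forall>j\<ge>N1. kip K (\<lambda>y. c i y - c j y) (\<lambda>y. c i y - c j y) < e/4"
    using q(1) \<open>0 < e\<close> unfolding qcauchy_def by (meson zero_less_divide_iff zero_less_numeral)
  obtain N2 where N2: "\<forall>i\<ge>N2. \<forall>j\<ge>N2. kip K (\<lambda>y. d i y - d j y) (\<lambda>y. d i y - d j y) < e/4"
    using q(2) \<open>0 < e\<close> unfolding qcauchy_def by (meson zero_less_divide_iff zero_less_numeral)
  show "\<exists>N. \<forall>i\<ge>N. \<forall>j\<ge>N. kip K (\<lambda>y. (c i y - d i y) - (c j y - d j y)) (\<lambda>y. (c i y - d i y) - (c j y - d j y)) < e"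
  proof (intro exI[of _ "max N1 N2"] allI impI)
    fix i j assume "max N1 N2 \<le> i" "max N1 N2 \<le> j"
    have eq: "(\<lambda>y. (c i y - d i y) - (c j y - d j y)) = (\<lambda>y. (c i y - c j y) - (d i y - d j y))"
      by (auto simp: algebra_simps)
    have "kip K (\<lambda>y. (c i y - c j y) - (d i y - d j y)) (\<lambda>y. (c i y - c j y) - (d i y - d j y))
        \<le> 2 * kip K (\<lambda>y. c i y - c j y) (\<lambda>y. c i y - c j y) + 2 * kip K (\<lambda>y. d i y - d j y) (\<lambda>y. d i y - d j y)"
      by (rule q_diff_le2[OF K fin_diff[OF fin(1) fin(1)] fin_diff[OF fin(2) fin(2)]])
    also have "\<dots> < e"
      using N1 N2 \<open>max N1 N2 \<le> i\<close> \<open>max N1 N2 \<le> j\<close> by fastforce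
    finally show "kip K (\<lambda>y. (c i y - d i y) - (c j y - d j y)) (\<lambda>y. (c i y - d i y) - (c j y - d j y)) < e"
      unfolding eq .
  qed
qed

lemma qcauchy_zero:
  assumes K: "stationary_pd_kernel K" and fc: "\<And>j. fin_coeffs \<Omega> (e j)" and q: "qcauchy K e"
    and pt: "\<And>y. y \<in> \<Omega> \<Longrightarrow> (\<lambda>j. kfun K (e j) y) \<longlonglongrightarrow> 0"
  shows "(\<lambda>j. kip K (e j) (e j)) \<longlonglongrightarrow> 0"
proof -
  have fin: "\<And>j. finite {y. e j y \<noteq> 0}" using fc unfolding fin_coeffs_def by auto
  have sub: "\<And>j. {y. e j y \<noteq> 0} \<subseteq> \<Omega>" using fc unfolding fin_coeffs_def by auto
  define s where "s j = sqrt (kip K (e j) (e j))" for j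
  obtain sl where sl: "s \<longlonglongrightarrow> sl" using qcauchy_conv[OF K fin q] unfolding s_def convergent_def by auto
  have sl0: "0 \<le> sl" by (rule LIMSEQ_le_const[OF sl]) (use kip_nonneg[OF K fin] in \<open>auto simp: s_def\<close>)
  have sq: "\<And>j. kip K (e j) (e j) = (s j)^2" using kip_nonneg[OF K fin] by (simp add: s_def)
  have "sl = 0"
  proof (rule ccontr)
    assume "sl \<noteq> 0"
    then have slp: "sl > 0" using sl0 by auto
    define \<eta> where "\<eta> = sl / 2"
    have "\<eta> > 0" using slp by (simp add: \<eta>_def)
    then obtain N where N: "\<forall>i\<ge>N. \<forall>j\<ge>N. kip K (\<lambda>y. e i y - e j y) (\<lambda>y. e i y - e j y) < \<eta>^2"
      using q unfolding qcauchy_def by (meson zero_less_power)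
    have lim1: "(\<lambda>j. (s j)^2) \<longlonglongrightarrow> sl^2" by (intro tendsto_intros sl)
    have lim2: "(\<lambda>j. s j * \<eta> + kip K (e N) (e j)) \<longlonglongrightarrow> sl * \<eta> + 0"
    proof (intro tendsto_intros sl)
      have "(\<lambda>j. \<Sum>y\<in>{y. e N y \<noteq> 0}. e N y * kfun K (e j) y) \<longlonglongrightarrow> 0"
        by (rule tendsto_null_sum) (use pt sub in \<open>auto intro: tendsto_mult_right_zero\<close>)
      then show "(\<lambda>j. kip K (e N) (e j)) \<longlonglongrightarrow> 0" unfolding kip_kfun .
    qed
    have "sl^2 \<le> sl * \<eta> + 0"
    proof (rule LIMSEQ_le[OF lim1 lim2], intro exI allI impI)
      fix j assume "N \<le> j"
      have fd: "finite {y. e j y - e N y \<noteq> 0}" by (rule fin_diff[OF fin fin])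
      have "kip K (e j) (e j) = kip K (e j) (\<lambda>y. e j y - e N y) + kip K (e j) (e N)"
        unfolding kip_diff_right[OF fin fin] by simp
      also have "kip K (e j) (\<lambda>y. e j y - e N y) \<le> s j * \<eta>"
      proof -
        have "sqrt (kip K (\<lambda>y. e j y - e N y) (\<lambda>y. e j y - e N y)) < sqrt (\<eta>^2)"
          using N \<open>N \<le> j\<close> real_sqrt_less_mono by blast
        then have "sqrt (kip K (\<lambda>y. e j y - e N y) (\<lambda>y. e j y - e N y)) \<le> \<eta>" using \<open>\<eta> > 0\<close> by simp
        moreover have "s j \<ge> 0" using kip_nonneg[OF K fin] by (simp add: s_def)
        ultimately have "s j * sqrt (kip K (\<lambda>y. e j y - e N y) (\<lambda>y. e j y - e N y)) \<le> s j * \<eta>"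
          by (simp add: mult_left_mono)
        moreover have "kip K (e j) (\<lambda>y. e j y - e N y) \<le> s j * sqrt (kip K (\<lambda>y. e j y - e N y) (\<lambda>y. e j y - e N y))"
          using kip_abs_le[OF K fin fd, of j] by (simp add: s_def)
        ultimately show ?thesis by linarith
      qed
      finally show "(s j)^2 \<le> s j * \<eta> + kip K (e N) (e j)"
        using sq[of j] kip_sym_pd[OF K, of "e j" "e N"] by simp
    qed
    then show False using slp by (simp add: \<eta>_def power2_eq_square)
  qed
  then show ?thesis using tendsto_power[OF sl, of 2] sq by simp
qed

lemma native_norm_lim:
  assumes K: "stationary_pd_kernel K" and na: "native_approx K \<Omega> c f"
  shows "(\<lambda>j. sqrt (kip K (c j) (c j))) \<longlonglongrightarrow> native_norm K \<Omega> f"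
proof -
  have uniq: "r = r'" if na1: "native_approx K \<Omega> c1 f" and na2: "native_approx K \<Omega> c2 f"
    and l1: "(\<lambda>j. sqrt (kip K (c1 j) (c1 j))) \<longlonglongrightarrow> r"
    and l2: "(\<lambda>j. sqrt (kip K (c2 j) (c2 j))) \<longlonglongrightarrow> r'" for c1 c2 r r'
  proof -
    have fc1: "\<And>j. fin_coeffs \<Omega> (c1 j)" and fc2: "\<And>j. fin_coeffs \<Omega> (c2 j)"
      using na1 na2 unfolding native_approx_def by auto
    have fin1: "\<And>j. finite {y. c1 j y \<noteq> 0}" and fin2: "\<And>j. finite {y. c2 j y \<noteq> 0}"
      using fc1 fc2 unfolding fin_coeffs_def by auto
    have q1: "qcauchy K c1" and q2: "qcauchy K c2"
      using na1 na2 unfolding native_approx_def qcauchy_def by auto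
    define e where "e j y = c1 j y - c2 j y" for j y
    have fce: "fin_coeffs \<Omega> (e j)" for j
    proof -
      have s: "{y. e j y \<noteq> 0} \<subseteq> {y. c1 j y \<noteq> 0} \<union> {y. c2 j y \<noteq> 0}" by (auto simp: e_def)
      have "{y. c1 j y \<noteq> 0} \<union> {y. c2 j y \<noteq> 0} \<subseteq> \<Omega>" using fc1[of j] fc2[of j] unfolding fin_coeffs_def by auto
      then show ?thesis using s fin1[of j] fin2[of j] unfolding fin_coeffs_def
        by (meson finite_UnI finite_subset order_trans)
    qed
    have qe: "qcauchy K e" using qcauchy_diff[OF K fin1 fin2 q1 q2] unfolding e_def[abs_def] .
    have pte: "(\<lambda>j. kfun K (e j) y) \<longlonglongrightarrow> 0" if "y \<in> \<Omega>" for y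
    proof -
      have "(\<lambda>j. kfun K (c1 j) y - kfun K (c2 j) y) \<longlonglongrightarrow> f y - f y"
        using na1 na2 that unfolding native_approx_def by (intro tendsto_diff) auto
      then show ?thesis unfolding e_def[abs_def] kfun_diff[OF fin1 fin2] by simp
    qed
    have z: "(\<lambda>j. kip K (e j) (e j)) \<longlonglongrightarrow> 0" by (rule qcauchy_zero[OF K fce qe pte])
    then have zs: "(\<lambda>j. sqrt (kip K (e j) (e j))) \<longlonglongrightarrow> 0" using tendsto_real_sqrt[OF z] by simp
    have "(\<lambda>j. sqrt (kip K (c1 j) (c1 j)) - sqrt (kip K (c2 j) (c2 j))) \<longlonglongrightarrow> 0"
    proof (rule Lim_null_comparison[OF _ zs])
      show "\<forall>\<^sub>F j in sequentially. norm (sqrt (kip K (c1 j) (c1 j)) - sqrt (kip K (c2 j) (c2 j))) \<le> sqrt (kip K (e j) (e j))"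
        using qn_diff_le[OF K fin1 fin2] unfolding e_def[abs_def] by simp
    qed
    moreover have "(\<lambda>j. sqrt (kip K (c1 j) (c1 j)) - sqrt (kip K (c2 j) (c2 j))) \<longlonglongrightarrow> r - r'"
      by (intro tendsto_diff l1 l2)
    ultimately show ?thesis using LIMSEQ_unique by fastforce
  qed
  have fin: "\<And>j. finite {y. c j y \<noteq> 0}" using na unfolding native_approx_def fin_coeffs_def by auto
  have q: "qcauchy K c" using na unfolding native_approx_def qcauchy_def by auto
  obtain r where r: "(\<lambda>j. sqrt (kip K (c j) (c j))) \<longlonglongrightarrow> r"
    using qcauchy_conv[OF K fin q] unfolding convergent_def by auto
  have "native_norm K \<Omega> f = r"
    unfolding native_norm_def
  proof (rule the_equality)
    show "\<exists>c. native_approx K \<Omega> c f \<and> (\<lambda>j. sqrt (kip K (c j) (c j))) \<longlonglongrightarrow> r" using na r by auto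
    fix r' assume "\<exists>c. native_approx K \<Omega> c f \<and> (\<lambda>j. sqrt (kip K (c j) (c j))) \<longlonglongrightarrow> r'"
    then show "r' = r" using uniq[OF _ na _ r] by blast
  qed
  then show ?thesis using r by simp
qed

definition cf :: "('n::finite \<Rightarrow> 'a) \<Rightarrow> real^'n \<Rightarrow> 'a \<Rightarrow> real" where
  "cf X a y = (\<Sum>k\<in>UNIV. if X k = y then a$k else 0)"

lemma cf_at: "inj X \<Longrightarrow> cf X a (X k) = a$k"
proof -
  assume "inj X"
  then have "\<And>k'. (X k' = X k) = (k' = k)" by (simp add: inj_eq)
  then show ?thesis unfolding cf_def by simp
qed

lemma cf_supp: "{y. cf X a y \<noteq> 0} \<subseteq> range X"
proof
  fix y assume "y \<in> {y. cf X a y \<noteq> 0}"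
  show "y \<in> range X"
  proof (rule ccontr)
    assume "y \<notin> range X"
    then have "\<forall>k. X k \<noteq> y" by auto
    then have "cf X a y = 0" by (simp add: cf_def)
    with \<open>y \<in> {y. cf X a y \<noteq> 0}\<close> show False by simp
  qed
qed

lemma cf_fin: "finite {y. cf X a y \<noteq> 0}"
  by (rule finite_subset[OF cf_supp]) simp

lemma sum_cf:
  assumes "inj X"
  shows "(\<Sum>y\<in>{y. cf X a y \<noteq> 0}. cf X a y * g y) = (\<Sum>k\<in>UNIV. a$k * g (X k))"
proof -
  have "(\<Sum>y\<in>{y. cf X a y \<noteq> 0}. cf X a y * g y) = (\<Sum>y\<in>range X. cf X a y * g y)"
    by (rule sum_supp_superset[OF _ cf_supp]) simp
  also have "\<dots> = (\<Sum>k\<in>UNIV. cf X a (X k) * g (X k))"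
    using sum.reindex[OF assms, of "\<lambda>y. cf X a y * g y"] by simp
  also have "\<dots> = (\<Sum>k\<in>UNIV. a$k * g (X k))" using cf_at[OF assms] by simp
  finally show ?thesis .
qed

lemma kfun_cf: "inj X \<Longrightarrow> kfun K (cf X a) z = (\<Sum>k\<in>UNIV. a$k * K (z - X k))"
  unfolding kfun_def by (rule sum_cf)

lemma kip_cf: "inj X \<Longrightarrow> kip K (cf X a) d = (\<Sum>k\<in>UNIV. a$k * kfun K d (X k))"
  unfolding kip_kfun by (rule sum_cf)

definition Amat :: "('a::ab_group_add \<Rightarrow> real) \<Rightarrow> ('n::finite \<Rightarrow> 'a) \<Rightarrow> real \<Rightarrow> real^'n^'n" where
  "Amat \<Phi> X \<mu> = (\<chi> j k. \<Phi> (X j - X k)) + \<mu> *\<^sub>R mat 1"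

lemma Amat_mult: "(Amat \<Phi> X \<mu> *v v)$j = (\<Sum>k\<in>UNIV. \<Phi> (X j - X k) * v$k) + \<mu> * v$j"
proof -
  have "(Amat \<Phi> X \<mu> *v v)$j = (\<Sum>k\<in>UNIV. \<Phi> (X j - X k) * v$k + (if j = k then \<mu> * v$k else 0))"
    unfolding Amat_def matrix_vector_mult_def mat_def by (auto intro!: sum.cong simp: algebra_simps)
  then show ?thesis by (simp add: sum.distrib)
qed

lemma Amat_invertible:
  assumes K: "stationary_pd_kernel \<Phi>" and X: "inj X" and mu: "\<mu> > 0"
  shows "invertible (Amat \<Phi> X \<mu>)"
proof -
  have ker: "\<forall>v. Amat \<Phi> X \<mu> *v v = 0 \<longrightarrow> v = 0"
  proof (intro allI impI)
    fix v assume v0: "Amat \<Phi> X \<mu> *v v = 0"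
    have "0 = (\<Sum>j\<in>UNIV. v$j * (Amat \<Phi> X \<mu> *v v)$j)" using v0 by simp
    also have "\<dots> = (\<Sum>j\<in>UNIV. v$j * (\<Sum>k\<in>UNIV. \<Phi> (X j - X k) * v$k)) + \<mu> * (\<Sum>j\<in>UNIV. (v$j)^2)"
      unfolding Amat_mult by (simp add: algebra_simps sum.distrib sum_distrib_left power2_eq_square)
    also have "(\<Sum>j\<in>UNIV. v$j * (\<Sum>k\<in>UNIV. \<Phi> (X j - X k) * v$k)) = kip \<Phi> (cf X v) (cf X v)"
      unfolding kip_cf[OF X] kfun_cf[OF X] by (simp add: mult.commute)
    finally have eq: "0 = kip \<Phi> (cf X v) (cf X v) + \<mu> * (\<Sum>j\<in>UNIV. (v$j)^2)" .
    have "0 \<le> kip \<Phi> (cf X v) (cf X v)" by (rule kip_nonneg[OF K cf_fin])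
    moreover have "0 \<le> (\<Sum>j\<in>UNIV. (v$j)^2)" by (simp add: sum_nonneg)
    ultimately have "(\<Sum>j\<in>UNIV. (v$j)^2) = 0" using eq mu
      by (smt (verit, best) mult_pos_pos)
    then have "\<forall>j\<in>UNIV. (v$j)^2 = 0" by (subst (asm) sum_nonneg_eq_0_iff) auto
    then show "v = 0" by (simp add: vec_eq_iff)
  qed
  then obtain B where B: "B ** Amat \<Phi> X \<mu> = mat 1" using matrix_left_invertible_ker by blast
  then have "Amat \<Phi> X \<mu> ** B = mat 1" using matrix_left_right_inverse by blast
  then show ?thesis using B unfolding invertible_def by blast
qed

lemma Amat_solve:
  assumes "invertible (A::real^'n^'n)"
  shows "A *v (matrix_inv A *v Y) = Y"
proof -
  have "A ** matrix_inv A = mat 1 \<and> matrix_inv A ** A = mat 1"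
    using assms unfolding invertible_def matrix_inv_def by (rule someI_ex)
  then show ?thesis by (simp add: matrix_vector_mul_assoc)
qed

lemma gp_pred_cf: "inj X \<Longrightarrow> gp_pred \<Phi> X \<mu> Y x = kfun \<Phi> (cf X (matrix_inv (Amat \<Phi> X \<mu>) *v Y)) x"
  unfolding gp_pred_def kfun_cf Amat_def[symmetric] inner_vec_def
  by (simp add: mult.commute)

lemma kfun_delta_cs:
  assumes K: "stationary_pd_kernel K" and e: "finite {y. e y \<noteq> 0}"
  shows "(kfun K e x)^2 \<le> K 0 * kip K e e"
proof -
  define \<delta> where "\<delta> = (\<lambda>y. if y = x then 1 else (0::real))"
  have s: "{y. \<delta> y \<noteq> 0} = {x}" by (auto simp: \<delta>_def)
  have fd: "finite {y. \<delta> y \<noteq> 0}" using s by simp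
  have 1: "kip K \<delta> e = kfun K e x" unfolding kip_kfun s by (simp add: \<delta>_def)
  have 2: "kip K \<delta> \<delta> = K 0" unfolding kip_kfun s by (simp add: \<delta>_def kfun_def s)
  show ?thesis using kip_cs[OF K fd e] 1 2 by simp
qed

lemma krr_at:
  fixes \<Phi> :: "'a::ab_group_add \<Rightarrow> real" and X :: "'n::finite \<Rightarrow> 'a" and y :: "'n \<Rightarrow> real"
  assumes K: "stationary_pd_kernel \<Phi>" and X: "inj X" and XO: "\<forall>k. X k \<in> \<Omega>"
    and mu: "\<mu> > 0" and lam: "lam = \<mu> / real CARD('n)" and x: "x \<in> \<Omega>"
  shows "krr \<Phi> \<Omega> X y lam x = gp_pred \<Phi> X \<mu> (\<chi> k. y k) x"
proof -
  define n where "n = real CARD('n)"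
  have n0: "n > 0" unfolding n_def by simp
  have lamp: "lam > 0" using mu n0 lam n_def by simp
  define a where "a = matrix_inv (Amat \<Phi> X \<mu>) *v (\<chi> k. y k)"
  define cs where "cs = cf X a"
  define gs where "gs = kfun \<Phi> cs"
  have gp: "gp_pred \<Phi> X \<mu> (\<chi> k. y k) x = gs x" unfolding gs_def cs_def a_def gp_pred_cf[OF X] ..
  have fcs: "finite {y. cs y \<noteq> 0}" unfolding cs_def by (rule cf_fin)
  have neq: "y k - kfun \<Phi> cs (X k) = \<mu> * a$k" for k
  proof -
    have "Amat \<Phi> X \<mu> *v a = (\<chi> k. y k)"
      unfolding a_def by (rule Amat_solve[OF Amat_invertible[OF K X mu]])
    then have "(Amat \<Phi> X \<mu> *v a)$k = y k" by simp
    then show ?thesis unfolding Amat_mult cs_def kfun_cf[OF X] by (simp add: mult.commute)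
  qed
  define T where "T c = (1 / n) * (\<Sum>k\<in>UNIV. (y k - kfun \<Phi> c (X k))^2) + lam * kip \<Phi> c c" for c
  have ident: "T c = T cs + (1 / n) * (\<Sum>k\<in>UNIV. (kfun \<Phi> (\<lambda>z. c z - cs z) (X k))^2)
                + lam * kip \<Phi> (\<lambda>z. c z - cs z) (\<lambda>z. c z - cs z)"
    if fc: "finite {y. c y \<noteq> 0}" for c
  proof -
    define e where "e = (\<lambda>z. c z - cs z)"
    have fe: "finite {y. e y \<noteq> 0}" unfolding e_def by (rule fin_diff[OF fc fcs])
    have ce: "c = (\<lambda>z. cs z + e z)" by (simp add: e_def)
    define E where "E k = kfun \<Phi> e (X k)" for k
    have kc: "kfun \<Phi> c (X k) = kfun \<Phi> cs (X k) + E k" for k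
      unfolding E_def by (subst ce) (rule kfun_add[OF fcs fe])
    have qc: "kip \<Phi> c c = kip \<Phi> cs cs + 2 * (\<Sum>k\<in>UNIV. a$k * E k) + kip \<Phi> e e"
    proof -
      have "kip \<Phi> c c = kip \<Phi> cs cs + 2 * kip \<Phi> cs e + kip \<Phi> e e"
        by (subst (1 2) ce) (simp add: kip_add_left[OF fcs fe] kip_add_right[OF fcs fe] kip_sym_pd[OF K, of e cs])
      moreover have "kip \<Phi> cs e = (\<Sum>k\<in>UNIV. a$k * E k)" unfolding cs_def kip_cf[OF X] E_def ..
      ultimately show ?thesis by simp
    qed
    define m where "m = 1 / n"
    define S where "S = (\<Sum>k\<in>UNIV. a$k * E k)"
    have F0: "T c = m * (\<Sum>k\<in>UNIV. (\<mu> * a$k - E k)^2) + lam * (kip \<Phi> cs cs + 2 * S + kip \<Phi> e e)"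
      unfolding T_def qc m_def S_def using kc neq by (simp add: algebra_simps)
    have sq: "(\<Sum>k\<in>UNIV. (\<mu> * a$k - E k)^2) = (\<Sum>k\<in>UNIV. (\<mu> * a$k)^2) - 2 * \<mu> * S + (\<Sum>k\<in>UNIV. (E k)^2)"
      unfolding S_def by (simp add: power2_diff sum.distrib sum_subtractf sum_distrib_left algebra_simps)
    have F2: "T cs = m * (\<Sum>k\<in>UNIV. (\<mu> * a$k)^2) + lam * kip \<Phi> cs cs"
      unfolding T_def m_def using neq by simp
    have lam': "lam = \<mu> * m" unfolding lam m_def n_def by simp
    show ?thesis unfolding e_def[symmetric] E_def[symmetric] m_def[symmetric]
      using F0 F2 unfolding sq lam' by (simp add: algebra_simps)
  qed
  have Tge: "T c \<ge> T cs + lam * kip \<Phi> (\<lambda>z. c z - cs z) (\<lambda>z. c z - cs z)"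
    if fc: "finite {y. c y \<noteq> 0}" for c
    using ident[OF fc] n0 by (simp add: sum_nonneg)
  have fcs_O: "fin_coeffs \<Omega> cs"
    unfolding fin_coeffs_def cs_def using cf_fin cf_supp[of X a] XO by blast
  have nas: "native_approx \<Phi> \<Omega> (\<lambda>j. cs) gs"
    unfolding native_approx_def gs_def using fcs_O by (simp add: kip_zero_left)
  have nm_gs: "native_norm \<Phi> \<Omega> gs = sqrt (kip \<Phi> cs cs)"
    using native_norm_lim[OF K nas] unfolding LIMSEQ_const_iff by simp
  have obj_gs: "krr_obj \<Phi> \<Omega> X y lam gs = T cs"
    unfolding krr_obj_def nm_gs unfolding T_def n_def gs_def using kip_nonneg[OF K fcs] by simp
  have lim_obj: "(\<lambda>j. T (c j)) \<longlonglongrightarrow> krr_obj \<Phi> \<Omega> X y lam h" and fin_c: "\<And>j. finite {y. c j y \<noteq> 0}"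
    if na: "native_approx \<Phi> \<Omega> c h" for c h
  proof -
    show fin: "\<And>j. finite {y. c j y \<noteq> 0}" using na unfolding native_approx_def fin_coeffs_def by auto
    have pt: "(\<lambda>j. kfun \<Phi> (c j) (X k)) \<longlonglongrightarrow> h (X k)" for k using na XO unfolding native_approx_def by auto
    have T: "T (c j) = (1 / n) * (\<Sum>k\<in>UNIV. (y k - kfun \<Phi> (c j) (X k))^2) + lam * (sqrt (kip \<Phi> (c j) (c j)))^2" for j
      unfolding T_def using kip_nonneg[OF K fin] by simp
    show "(\<lambda>j. T (c j)) \<longlonglongrightarrow> krr_obj \<Phi> \<Omega> X y lam h"
      unfolding T krr_obj_def n_def
      by (intro tendsto_intros pt native_norm_lim[OF K na])
  qed
  have min_gs: "krr_obj \<Phi> \<Omega> X y lam gs \<le> krr_obj \<Phi> \<Omega> X y lam h" if hn: "h \<in> native_space \<Phi> \<Omega>" for h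
  proof -
    obtain c where na: "native_approx \<Phi> \<Omega> c h" using hn unfolding native_space_def by auto
    show ?thesis unfolding obj_gs
    proof (rule LIMSEQ_le_const[OF lim_obj[OF na]], intro exI allI impI)
      fix j
      have "0 \<le> lam * kip \<Phi> (\<lambda>z. c j z - cs z) (\<lambda>z. c j z - cs z)"
        using lamp kip_nonneg[OF K fin_diff[OF fin_c[OF na] fcs]] by simp
      then show "T cs \<le> T (c j)" using Tge[OF fin_c[OF na, of j]] by linarith
    qed
  qed
  have gs_ns: "gs \<in> native_space \<Phi> \<Omega>" using nas unfolding native_space_def by auto
  define g where "g = krr \<Phi> \<Omega> X y lam"
  have Pg: "g \<in> native_space \<Phi> \<Omega> \<and> (\<forall>h\<in>native_space \<Phi> \<Omega>. krr_obj \<Phi> \<Omega> X y lam g \<le> krr_obj \<Phi> \<Omega> X y lam h)"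
  proof -
    have "\<exists>g. g \<in> native_space \<Phi> \<Omega> \<and> (\<forall>h\<in>native_space \<Phi> \<Omega>. krr_obj \<Phi> \<Omega> X y lam g \<le> krr_obj \<Phi> \<Omega> X y lam h)"
      using gs_ns min_gs by blast
    then show ?thesis unfolding g_def krr_def by (rule someI_ex)
  qed
  have "g \<in> native_space \<Phi> \<Omega>" using Pg by (rule conjunct1)
  then obtain c where na: "native_approx \<Phi> \<Omega> c g" unfolding native_space_def by blast
  have "krr_obj \<Phi> \<Omega> X y lam g \<le> krr_obj \<Phi> \<Omega> X y lam gs" using Pg gs_ns by blast
  then have og: "krr_obj \<Phi> \<Omega> X y lam g \<le> T cs" unfolding obj_gs .
  have fin: "\<And>j. finite {y. c j y \<noteq> 0}" by (rule fin_c[OF na])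
  have K0: "0 \<le> \<Phi> 0"
  proof -
    have "(kfun \<Phi> cs x)^2 \<le> \<Phi> 0 * kip \<Phi> cs cs" by (rule kfun_delta_cs[OF K fcs])
    define \<delta> where "\<delta> = (\<lambda>y. if y = x then 1 else (0::real))"
    have s: "{y. \<delta> y \<noteq> 0} = {x}" by (auto simp: \<delta>_def)
    have "kip \<Phi> \<delta> \<delta> = \<Phi> 0" unfolding kip_kfun s by (simp add: \<delta>_def kfun_def s)
    then show ?thesis using kip_nonneg[OF K, of \<delta>] s by simp
  qed
  have "(\<lambda>j. kfun \<Phi> (c j) x) \<longlonglongrightarrow> g x" using na x unfolding native_approx_def by blast
  then have l1: "(\<lambda>j. (kfun \<Phi> (c j) x - gs x)^2) \<longlonglongrightarrow> (g x - gs x)^2"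
    by (intro tendsto_intros)
  have l2: "(\<lambda>j. \<Phi> 0 / lam * (T (c j) - T cs)) \<longlonglongrightarrow> \<Phi> 0 / lam * (krr_obj \<Phi> \<Omega> X y lam g - T cs)"
    by (intro tendsto_intros lim_obj[OF na])
  have "(g x - gs x)^2 \<le> \<Phi> 0 / lam * (krr_obj \<Phi> \<Omega> X y lam g - T cs)"
  proof (rule LIMSEQ_le[OF l1 l2], intro exI allI impI)
    fix j
    have fe: "finite {z. c j z - cs z \<noteq> 0}" by (rule fin_diff[OF fin fcs])
    have "(kfun \<Phi> (c j) x - gs x)^2 = (kfun \<Phi> (\<lambda>z. c j z - cs z) x)^2"
      unfolding gs_def kfun_diff[OF fin fcs] ..
    also have "\<dots> \<le> \<Phi> 0 * kip \<Phi> (\<lambda>z. c j z - cs z) (\<lambda>z. c j z - cs z)" by (rule kfun_delta_cs[OF K fe])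
    also have "\<dots> \<le> \<Phi> 0 / lam * (T (c j) - T cs)"
    proof -
      have "lam * kip \<Phi> (\<lambda>z. c j z - cs z) (\<lambda>z. c j z - cs z) \<le> T (c j) - T cs" using Tge[OF fin, of j] by simp
      then have "kip \<Phi> (\<lambda>z. c j z - cs z) (\<lambda>z. c j z - cs z) \<le> (T (c j) - T cs) / lam"
        using lamp by (simp add: field_simps)
      then have "\<Phi> 0 * kip \<Phi> (\<lambda>z. c j z - cs z) (\<lambda>z. c j z - cs z) \<le> \<Phi> 0 * ((T (c j) - T cs) / lam)"
        using K0 by (rule mult_left_mono)
      then show ?thesis by simp
    qed
    finally show "(kfun \<Phi> (c j) x - gs x)^2 \<le> \<Phi> 0 / lam * (T (c j) - T cs)" .
  qed
  also have "\<dots> \<le> 0"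
  proof -
    have "\<Phi> 0 * (krr_obj \<Phi> \<Omega> X y lam g - T cs) \<le> 0" using og K0 by (simp add: mult_nonneg_nonpos)
    then show ?thesis using lamp by (simp add: divide_nonpos_pos)
  qed
  finally have "g x = gs x" by simp
  then have "krr \<Phi> \<Omega> X y lam x = gs x" unfolding g_def .
  then show ?thesis using gp by simp
qed

lemma L2_prod_integrable:
  fixes f g :: "'w \<Rightarrow> real"
  assumes fm: "f \<in> borel_measurable M" and gm: "g \<in> borel_measurable M"
    and f2: "integrable M (\<lambda>x. (f x)^2)" and g2: "integrable M (\<lambda>x. (g x)^2)"
  shows "integrable M (\<lambda>x. f x * g x)"
proof (rule Bochner_Integration.integrable_bound[OF Bochner_Integration.integrable_add[OF f2 g2]])
  show "(\<lambda>x. f x * g x) \<in> borel_measurable M" using fm gm by measurable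
  show "AE x in M. norm (f x * g x) \<le> norm ((f x)^2 + (g x)^2)"
  proof (rule AE_I2)
    fix x
    have "0 \<le> (\<bar>f x\<bar> - \<bar>g x\<bar>)^2" by simp
    then have "2 * (\<bar>f x\<bar> * \<bar>g x\<bar>) \<le> (f x)^2 + (g x)^2"
      by (simp add: power2_diff power2_abs algebra_simps)
    moreover have "0 \<le> \<bar>f x\<bar> * \<bar>g x\<bar>" by simp
    ultimately have "\<bar>f x\<bar> * \<bar>g x\<bar> \<le> (f x)^2 + (g x)^2" by linarith
    then show "norm (f x * g x) \<le> norm ((f x)^2 + (g x)^2)"
      by (simp add: abs_mult)
  qed
qed

lemma (in prob_space) second_moment:
  fixes \<epsilon> :: "'n::finite \<Rightarrow> 'a \<Rightarrow> real" and T :: "'a \<Rightarrow> real" and w :: "'n \<Rightarrow> real"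
  assumes ind: "indep_vars (\<lambda>_. borel) \<epsilon> UNIV"
    and e1: "\<forall>k. integrable M (\<epsilon> k) \<and> (\<integral>\<omega>. \<epsilon> k \<omega> \<partial>M) = 0"
    and e2: "\<forall>k. integrable M (\<lambda>\<omega>. (\<epsilon> k \<omega>)^2) \<and> (\<integral>\<omega>. (\<epsilon> k \<omega>)^2 \<partial>M) = \<sigma>^2"
    and Tm: "T \<in> borel_measurable M" and T2: "integrable M (\<lambda>\<omega>. (T \<omega>)^2)"
    and Te: "\<forall>k. (\<integral>\<omega>. T \<omega> * \<epsilon> k \<omega> \<partial>M) = 0"
  shows "(\<integral>\<omega>. (T \<omega> - (\<Sum>k\<in>UNIV. w k * \<epsilon> k \<omega>))^2 \<partial>M) = (\<integral>\<omega>. (T \<omega>)^2 \<partial>M) + \<sigma>^2 * (\<Sum>k\<in>UNIV. (w k)^2)"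
proof -
  have em: "\<epsilon> k \<in> borel_measurable M" for k using ind unfolding indep_vars_def2 by auto
  have iTe: "integrable M (\<lambda>\<omega>. T \<omega> * \<epsilon> k \<omega>)" for k
    by (rule L2_prod_integrable[OF Tm em T2]) (use e2 in auto)
  have iee: "integrable M (\<lambda>\<omega>. \<epsilon> k \<omega> * \<epsilon> l \<omega>)" for k l
    by (rule L2_prod_integrable[OF em em]) (use e2 in auto)
  have Eee: "(\<integral>\<omega>. \<epsilon> k \<omega> * \<epsilon> l \<omega> \<partial>M) = (if k = l then \<sigma>^2 else 0)" for k l
  proof (cases "k = l")
    case True then show ?thesis using e2 by (simp add: power2_eq_square)
  next
    case False
    have "indep_vars (\<lambda>_. borel) \<epsilon> {k, l}" by (rule indep_vars_subset[OF ind]) auto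
    then have "(\<integral>\<omega>. (\<Prod>i\<in>{k,l}. \<epsilon> i \<omega>) \<partial>M) = (\<Prod>i\<in>{k,l}. \<integral>\<omega>. \<epsilon> i \<omega> \<partial>M)"
      by (intro indep_vars_lebesgue_integral) (use e1 in auto)
    then show ?thesis using False e1 by simp
  qed
  define S where "S \<omega> = (\<Sum>k\<in>UNIV. w k * \<epsilon> k \<omega>)" for \<omega>
  have sq: "(\<lambda>\<omega>. (T \<omega> - S \<omega>)^2) = (\<lambda>\<omega>. (T \<omega>)^2 - (\<Sum>k\<in>UNIV. 2 * w k * (T \<omega> * \<epsilon> k \<omega>))
        + (\<Sum>k\<in>UNIV. \<Sum>l\<in>UNIV. w k * w l * (\<epsilon> k \<omega> * \<epsilon> l \<omega>)))"
  proof (rule ext)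
    fix \<omega>
    have 1: "2 * T \<omega> * S \<omega> = (\<Sum>k\<in>UNIV. 2 * w k * (T \<omega> * \<epsilon> k \<omega>))"
      unfolding S_def by (simp add: sum_distrib_left algebra_simps)
    have 2: "(S \<omega>)^2 = (\<Sum>k\<in>UNIV. \<Sum>l\<in>UNIV. w k * w l * (\<epsilon> k \<omega> * \<epsilon> l \<omega>))"
      unfolding S_def power2_eq_square sum_product by (simp add: algebra_simps)
    show "(T \<omega> - S \<omega>)^2 = (T \<omega>)^2 - (\<Sum>k\<in>UNIV. 2 * w k * (T \<omega> * \<epsilon> k \<omega>))
        + (\<Sum>k\<in>UNIV. \<Sum>l\<in>UNIV. w k * w l * (\<epsilon> k \<omega> * \<epsilon> l \<omega>))"
      unfolding power2_diff 1[symmetric] 2[symmetric] by (simp add: algebra_simps)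
  qed
  have i1: "integrable M (\<lambda>\<omega>. \<Sum>k\<in>UNIV. 2 * w k * (T \<omega> * \<epsilon> k \<omega>))"
    by (intro Bochner_Integration.integrable_sum Bochner_Integration.integrable_mult_right iTe)
  have i2: "integrable M (\<lambda>\<omega>. \<Sum>k\<in>UNIV. \<Sum>l\<in>UNIV. w k * w l * (\<epsilon> k \<omega> * \<epsilon> l \<omega>))"
    by (intro Bochner_Integration.integrable_sum Bochner_Integration.integrable_mult_right iee)
  have "(\<integral>\<omega>. (T \<omega> - S \<omega>)^2 \<partial>M) = (\<integral>\<omega>. (T \<omega>)^2 \<partial>M) - (\<integral>\<omega>. (\<Sum>k\<in>UNIV. 2 * w k * (T \<omega> * \<epsilon> k \<omega>)) \<partial>M)
        + (\<integral>\<omega>. (\<Sum>k\<in>UNIV. \<Sum>l\<in>UNIV. w k * w l * (\<epsilon> k \<omega> * \<epsilon> l \<omega>)) \<partial>M)"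
    unfolding sq by (simp add: T2 i1 i2)
  also have "(\<integral>\<omega>. (\<Sum>k\<in>UNIV. 2 * w k * (T \<omega> * \<epsilon> k \<omega>)) \<partial>M) = 0"
    by (subst Bochner_Integration.integral_sum) (use iTe Te in \<open>auto intro: Bochner_Integration.integrable_mult_right\<close>)
  also have "(\<integral>\<omega>. (\<Sum>k\<in>UNIV. \<Sum>l\<in>UNIV. w k * w l * (\<epsilon> k \<omega> * \<epsilon> l \<omega>)) \<partial>M)
      = (\<Sum>k\<in>UNIV. \<Sum>l\<in>UNIV. w k * w l * (if k = l then \<sigma>^2 else 0))"
  proof -
    have "(\<integral>\<omega>. (\<Sum>k\<in>UNIV. \<Sum>l\<in>UNIV. w k * w l * (\<epsilon> k \<omega> * \<epsilon> l \<omega>)) \<partial>M)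
        = (\<Sum>k\<in>UNIV. \<integral>\<omega>. (\<Sum>l\<in>UNIV. w k * w l * (\<epsilon> k \<omega> * \<epsilon> l \<omega>)) \<partial>M)"
      by (rule Bochner_Integration.integral_sum) (intro Bochner_Integration.integrable_sum Bochner_Integration.integrable_mult_right iee)
    also have "\<dots> = (\<Sum>k\<in>UNIV. \<Sum>l\<in>UNIV. \<integral>\<omega>. w k * w l * (\<epsilon> k \<omega> * \<epsilon> l \<omega>) \<partial>M)"
      by (intro sum.cong refl Bochner_Integration.integral_sum) (intro Bochner_Integration.integrable_mult_right iee)
    also have "\<dots> = (\<Sum>k\<in>UNIV. \<Sum>l\<in>UNIV. w k * w l * (if k = l then \<sigma>^2 else 0))"
      by (simp add: Eee)
    finally show ?thesis .
  qed
  also have "(\<Sum>k\<in>UNIV. \<Sum>l\<in>UNIV. w k * w l * (if k = l then \<sigma>^2 else 0)) = \<sigma>^2 * (\<Sum>k\<in>UNIV. (w k)^2)"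
  proof -
    have "(\<Sum>l\<in>UNIV. w k * w l * (if k = l then \<sigma>^2 else 0)) = \<sigma>^2 * (w k)^2" for k
    proof -
      have "(\<Sum>l\<in>UNIV. w k * w l * (if k = l then \<sigma>^2 else 0)) = (\<Sum>l\<in>UNIV. if k = l then w k * w l * \<sigma>^2 else 0)"
        by (intro sum.cong) auto
      then show ?thesis by (simp add: power2_eq_square)
    qed
    then show ?thesis by (simp add: sum_distrib_left)
  qed
  finally show ?thesis unfolding S_def by simp
qed

lemma sum_d:
  fixes X :: "'n::finite \<Rightarrow> 'a" and w :: "real^'n" and g :: "'a \<Rightarrow> real"
  assumes X: "inj X"
  shows "(\<Sum>y\<in>{y. (if y = x then 1 else 0) - cf X w y \<noteq> 0}. ((if y = x then 1 else 0) - cf X w y) * g y)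
         = g x - (\<Sum>k\<in>UNIV. w$k * g (X k))"
proof -
  define d where "d = (\<lambda>y. (if y = x then 1 else 0) - cf X w y)"
  define S where "S = insert x (range X)"
  have fS: "finite S" unfolding S_def by simp
  have sub: "{y. d y \<noteq> 0} \<subseteq> S"
  proof
    fix y assume "y \<in> {y. d y \<noteq> 0}"
    then have "y = x \<or> cf X w y \<noteq> 0" unfolding d_def by (auto split: if_splits)
    then show "y \<in> S" unfolding S_def using cf_supp[of X w] by auto
  qed
  have sub2: "{y. cf X w y \<noteq> 0} \<subseteq> S" unfolding S_def using cf_supp[of X w] by auto
  have "(\<Sum>y\<in>{y. d y \<noteq> 0}. d y * g y) = (\<Sum>y\<in>S. d y * g y)"
    by (rule sum_supp_superset[OF fS sub])
  also have "\<dots> = (\<Sum>y\<in>S. (if y = x then 1 else 0) * g y) - (\<Sum>y\<in>S. cf X w y * g y)"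
    unfolding d_def by (simp add: left_diff_distrib sum_subtractf)
  also have "(\<Sum>y\<in>S. (if y = x then 1 else 0) * g y) = (\<Sum>y\<in>S. (if y = x then g y else 0))"
    by (rule sum.cong) auto
  also have "(\<Sum>y\<in>S. (if y = x then g y else 0)) = g x" using fS by (simp add: S_def)
  also have "(\<Sum>y\<in>S. cf X w y * g y) = (\<Sum>y\<in>{y. cf X w y \<noteq> 0}. cf X w y * g y)"
    by (rule sum_supp_superset[OF fS sub2, symmetric])
  also have "\<dots> = (\<Sum>k\<in>UNIV. w$k * g (X k))" by (rule sum_cf[OF X])
  finally show ?thesis unfolding d_def .
qed

lemma indep_var_from_set:
  fixes M :: "'w measure" and \<Omega> :: "'b set" and Z :: "'b \<Rightarrow> 'w \<Rightarrow> real" and \<epsilon> :: "'n \<Rightarrow> 'w \<Rightarrow> real"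
  assumes P: "prob_space M"
    and ind: "prob_space.indep_set M
           (sets (vimage_algebra (space M) (\<lambda>\<omega>. restrict (\<lambda>y. Z y \<omega>) \<Omega>) (Pi\<^sub>M \<Omega> (\<lambda>_. borel))))
           (sets (vimage_algebra (space M) (\<lambda>\<omega> k. \<epsilon> k \<omega>) (Pi\<^sub>M UNIV (\<lambda>_. borel))))"
    and gm: "G \<in> borel_measurable (Pi\<^sub>M \<Omega> (\<lambda>_. borel))"
    and V: "\<And>\<omega>. \<omega> \<in> space M \<Longrightarrow> V \<omega> = G (restrict (\<lambda>y. Z y \<omega>) \<Omega>)"
    and Vm: "V \<in> borel_measurable M" and em: "\<epsilon> k \<in> borel_measurable M"
  shows "prob_space.indep_var M borel V borel (\<epsilon> k)"
proof -
  interpret prob_space M by (rule P)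
  let ?S1 = "sets (vimage_algebra (space M) (\<lambda>\<omega>. restrict (\<lambda>y. Z y \<omega>) \<Omega>) (Pi\<^sub>M \<Omega> (\<lambda>_. borel)))"
  let ?S2 = "sets (vimage_algebra (space M) (\<lambda>\<omega> k. \<epsilon> k \<omega>) (Pi\<^sub>M UNIV (\<lambda>_. borel)))"
  have i: "indep_sets (case_bool ?S1 ?S2) UNIV" using ind unfolding indep_set_def .
  have s1: "{V -` A \<inter> space M |A. A \<in> sets borel} \<subseteq> ?S1"
  proof safe
    fix A :: "real set" assume A: "A \<in> sets borel"
    have eq: "V -` A \<inter> space M = (\<lambda>\<omega>. restrict (\<lambda>y. Z y \<omega>) \<Omega>) -` (G -` A \<inter> space (Pi\<^sub>M \<Omega> (\<lambda>_. borel))) \<inter> space M"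
      using V by (auto simp: space_PiM)
    have "G -` A \<inter> space (Pi\<^sub>M \<Omega> (\<lambda>_. borel)) \<in> sets (Pi\<^sub>M \<Omega> (\<lambda>_. borel))"
      using gm A by (rule measurable_sets)
    then have "(\<lambda>\<omega>. restrict (\<lambda>y. Z y \<omega>) \<Omega>) -` (G -` A \<inter> space (Pi\<^sub>M \<Omega> (\<lambda>_. borel))) \<inter> space M \<in> ?S1"
      by (rule in_vimage_algebra)
    then show "V -` A \<inter> space M \<in> ?S1" by (simp only: eq)
  qed
  have s2: "{\<epsilon> k -` A \<inter> space M |A. A \<in> sets borel} \<subseteq> ?S2"
  proof safe
    fix A :: "real set" assume A: "A \<in> sets borel"
    have "\<epsilon> k -` A \<inter> space M = (\<lambda>\<omega> k. \<epsilon> k \<omega>) -` ((\<lambda>v. v k) -` A \<inter> space (Pi\<^sub>M UNIV (\<lambda>_::'n. borel))) \<inter> space M"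
      by (auto simp: space_PiM)
    moreover have "(\<lambda>v. v k) -` A \<inter> space (Pi\<^sub>M UNIV (\<lambda>_::'n. borel)) \<in> sets (Pi\<^sub>M UNIV (\<lambda>_. borel))"
      using measurable_component_singleton[of k UNIV "\<lambda>_. borel"] A by (auto intro: measurable_sets)
    then have "(\<lambda>\<omega> k. \<epsilon> k \<omega>) -` ((\<lambda>v. v k) -` A \<inter> space (Pi\<^sub>M UNIV (\<lambda>_::'n. borel))) \<inter> space M \<in> ?S2"
      by (rule in_vimage_algebra)
    ultimately show "\<epsilon> k -` A \<inter> space M \<in> ?S2" by (simp only:)
  qed
  show ?thesis
    unfolding indep_var_def indep_vars_def2
  proof
    show "\<forall>i\<in>UNIV. random_variable (case_bool borel borel i) (case_bool V (\<epsilon> k) i)"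
      using Vm em by (auto split: bool.split)
    show "indep_sets (\<lambda>i. {case_bool V (\<epsilon> k) i -` A \<inter> space M |A. A \<in> sets (case_bool borel borel i)}) UNIV"
      by (rule indep_sets_mono_sets[OF i]) (use s1 s2 in \<open>auto split: bool.split\<close>)
  qed
qed

theorem proposition3:
  fixes M :: "'w measure" and \<Omega> :: "(real^'d) set"
    and \<Psi> \<Phi> :: "real^'d \<Rightarrow> real" and X :: "'n::finite \<Rightarrow> real^'d"
    and \<epsilon> :: "'n \<Rightarrow> 'w \<Rightarrow> real" and \<sigma> :: real
    and f :: "real^'d \<Rightarrow> real" and Z :: "real^'d \<Rightarrow> 'w \<Rightarrow> real"
    and lam \<mu> :: real and x :: "real^'d"
  assumes "prob_space M"
    and "stationary_pd_kernel \<Psi>" and "stationary_pd_kernel \<Phi>"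
    and "integrable lborel \<Psi>" and "integrable lborel \<Phi>"
    and "inj X" and "\<forall>k. X k \<in> \<Omega>"
    and "prob_space.indep_vars M (\<lambda>_. borel) \<epsilon> UNIV"
    and "\<forall>k l. distr M borel (\<epsilon> k) = distr M borel (\<epsilon> l)"
    and "\<forall>k. integrable M (\<epsilon> k) \<and> (\<integral>\<omega>. \<epsilon> k \<omega> \<partial>M) = 0"
    and "\<forall>k. integrable M (\<lambda>\<omega>. (\<epsilon> k \<omega>)^2) \<and> (\<integral>\<omega>. (\<epsilon> k \<omega>)^2 \<partial>M) = \<sigma>^2"
    and "f \<in> native_space \<Psi> \<Omega>"
    and "centered_gp M \<Omega> \<Psi> Z"
    and "prob_space.indep_set M
           (sets (vimage_algebra (space M) (\<lambda>\<omega>. restrict (\<lambda>y. Z y \<omega>) \<Omega>) (Pi\<^sub>M \<Omega> (\<lambda>_. borel))))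
           (sets (vimage_algebra (space M) (\<lambda>\<omega> k. \<epsilon> k \<omega>) (Pi\<^sub>M UNIV (\<lambda>_. borel))))"
    and "\<mu> > 0" and "lam = \<mu> / real CARD('n)"
    and "x \<in> \<Omega>"
  shows "(\<integral>\<omega>. (f x - krr \<Phi> \<Omega> X (\<lambda>k. f (X k) + \<epsilon> k \<omega>) lam x)^2 \<partial>M)
           \<le> max 1 ((native_norm \<Psi> \<Omega> f)^2) *
             (\<integral>\<omega>. (Z x \<omega> - gp_pred \<Phi> X \<mu> (\<chi> k. Z (X k) \<omega> + \<epsilon> k \<omega>) x)^2 \<partial>M)"
proof -
  interpret P: prob_space M by (rule assms(1))
  have KPsi: "stationary_pd_kernel \<Psi>" and KPhi: "stationary_pd_kernel \<Phi>" using assms(2,3) .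
  have Xinj: "inj X" and XO: "\<forall>k. X k \<in> \<Omega>" and xO: "x \<in> \<Omega>" using assms(6,7,17) .
  have em: "\<epsilon> k \<in> borel_measurable M" for k using assms(8) unfolding P.indep_vars_def2 by auto
  define A where "A = Amat \<Phi> X \<mu>"
  define w :: "real^'n" where "w = (\<chi> j. \<Phi> (x - X j)) v* matrix_inv A"
  have gp: "gp_pred \<Phi> X \<mu> Y x = (\<Sum>k\<in>UNIV. w$k * Y$k)" for Y
  proof -
    have "gp_pred \<Phi> X \<mu> Y x = (\<chi> j. \<Phi> (x - X j)) \<bullet> (matrix_inv A *v Y)"
      unfolding gp_pred_def A_def Amat_def ..
    also have "\<dots> = w \<bullet> Y" unfolding w_def by (rule dot_lmul_matrix[symmetric])
    also have "\<dots> = (\<Sum>k\<in>UNIV. w$k * Y$k)" by (simp add: inner_vec_def)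
    finally show ?thesis .
  qed
  define W where "W = (\<Sum>k\<in>UNIV. (w$k)^2)"
  define u where "u = f x - (\<Sum>k\<in>UNIV. w$k * f (X k))"
  have lhs_eq: "(f x - krr \<Phi> \<Omega> X (\<lambda>k. f (X k) + \<epsilon> k \<omega>) lam x)^2 = (u - (\<Sum>k\<in>UNIV. w$k * \<epsilon> k \<omega>))^2" for \<omega>
  proof -
    have "krr \<Phi> \<Omega> X (\<lambda>k. f (X k) + \<epsilon> k \<omega>) lam x = gp_pred \<Phi> X \<mu> (\<chi> k. f (X k) + \<epsilon> k \<omega>) x"
      by (rule krr_at[OF KPhi Xinj XO assms(15) assms(16) xO])
    then show ?thesis unfolding gp u_def by (simp add: sum.distrib algebra_simps)
  qed
  have LHS: "(\<integral>\<omega>. (f x - krr \<Phi> \<Omega> X (\<lambda>k. f (X k) + \<epsilon> k \<omega>) lam x)^2 \<partial>M) = u^2 + \<sigma>^2 * W"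
  proof -
    have "(\<integral>\<omega>. (f x - krr \<Phi> \<Omega> X (\<lambda>k. f (X k) + \<epsilon> k \<omega>) lam x)^2 \<partial>M)
        = (\<integral>\<omega>. ((\<lambda>_. u) \<omega> - (\<Sum>k\<in>UNIV. (\<lambda>k. w$k) k * \<epsilon> k \<omega>))^2 \<partial>M)"
      unfolding lhs_eq by simp
    also have "\<dots> = (\<integral>\<omega>. ((\<lambda>_. u) \<omega>)^2 \<partial>M) + \<sigma>^2 * (\<Sum>k\<in>UNIV. ((\<lambda>k. w$k) k)^2)"
    proof (rule P.second_moment[OF assms(8) assms(10) assms(11)])
      show "(\<lambda>_. u) \<in> borel_measurable M" by simp
      show "integrable M (\<lambda>\<omega>. ((\<lambda>_. u) \<omega>)^2)" by simp
      show "\<forall>k. (\<integral>\<omega>. (\<lambda>_. u) \<omega> * \<epsilon> k \<omega> \<partial>M) = 0" using assms(10) by simp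
    qed
    also have "\<dots> = u^2 + \<sigma>^2 * W" unfolding W_def by (simp add: P.prob_space)
    finally show ?thesis .
  qed
  define d where "d = (\<lambda>y. (if y = x then 1 else 0) - cf X w y)"
  have dsub: "{y. d y \<noteq> 0} \<subseteq> insert x (range X)"
  proof
    fix y assume "y \<in> {y. d y \<noteq> 0}"
    then have "y = x \<or> cf X w y \<noteq> 0" unfolding d_def by (auto split: if_splits)
    then show "y \<in> insert x (range X)" using cf_supp[of X w] by auto
  qed
  have fd: "finite {y. d y \<noteq> 0}" by (rule finite_subset[OF dsub]) simp
  have dO: "{y. d y \<noteq> 0} \<subseteq> \<Omega>" using dsub XO xO by auto
  have sd: "(\<Sum>y\<in>{y. d y \<noteq> 0}. d y * g y) = g x - (\<Sum>k\<in>UNIV. w$k * g (X k))" for g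
    unfolding d_def by (rule sum_d[OF Xinj])
  have Zm: "Z y \<in> borel_measurable M" if yO: "y \<in> \<Omega>" for y
  proof -
    define \<delta> where "\<delta> = (\<lambda>z. if z = y then 1 else (0::real))"
    have s: "{z. \<delta> z \<noteq> 0} = {y}" by (auto simp: \<delta>_def)
    have "fin_coeffs \<Omega> \<delta> \<and> (\<exists>z. \<delta> z \<noteq> 0)" unfolding fin_coeffs_def s using yO by (auto simp: \<delta>_def)
    then have "distributed M lborel (\<lambda>\<omega>. \<Sum>z\<in>{z. \<delta> z \<noteq> 0}. \<delta> z * Z z \<omega>) (normal_density 0 (sqrt (kip \<Psi> \<delta> \<delta>)))"
      using assms(13) unfolding centered_gp_def by blast
    then have "(\<lambda>\<omega>. \<Sum>z\<in>{z. \<delta> z \<noteq> 0}. \<delta> z * Z z \<omega>) \<in> measurable M lborel" by (rule distributed_measurable)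
    moreover have "(\<lambda>\<omega>. \<Sum>z\<in>{z. \<delta> z \<noteq> 0}. \<delta> z * Z z \<omega>) = Z y" unfolding s by (simp add: \<delta>_def)
    ultimately show ?thesis by simp
  qed
  define V where "V \<omega> = Z x \<omega> - (\<Sum>k\<in>UNIV. w$k * Z (X k) \<omega>)" for \<omega>
  have Vm: "V \<in> borel_measurable M"
    unfolding V_def[abs_def]
    by (intro borel_measurable_diff borel_measurable_sum borel_measurable_times borel_measurable_const Zm xO XO[rule_format])
  have Vfun: "V = (\<lambda>\<omega>. \<Sum>y\<in>{y. d y \<noteq> 0}. d y * Z y \<omega>)"
    unfolding V_def[abs_def] sd by simp
  have VV: "integrable M (\<lambda>\<omega>. (V \<omega>)^2) \<and> (\<integral>\<omega>. (V \<omega>)^2 \<partial>M) = kip \<Psi> d d"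
  proof (cases "\<exists>y. d y \<noteq> 0")
    case True
    have fc: "fin_coeffs \<Omega> d" using fd dO unfolding fin_coeffs_def by auto
    have D: "distributed M lborel V (normal_density 0 (sqrt (kip \<Psi> d d)))"
      using assms(13) fc True unfolding centered_gp_def Vfun by blast
    have Qp: "kip \<Psi> d d > 0" using KPsi fd True unfolding stationary_pd_kernel_def by auto
    have sp: "sqrt (kip \<Psi> d d) > 0" using Qp by simp
    have "integrable lborel (\<lambda>t. normal_density 0 (sqrt (kip \<Psi> d d)) t * t^2)"
      using integrable_normal_moment[where \<mu>=0 and \<sigma>="sqrt (kip \<Psi> d d)" and k=2] sp by simp
    then have i: "integrable M (\<lambda>\<omega>. (V \<omega>)^2)"
      using distributed_integrable[OF D, of "\<lambda>t. t^2"] by (simp add: normal_density_nonneg)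
    have "P.variance V = (sqrt (kip \<Psi> d d))^2" by (rule P.normal_distributed_variance[OF sp D])
    moreover have "P.expectation V = 0" by (rule P.normal_distributed_expectation[OF sp D])
    ultimately have "(\<integral>\<omega>. (V \<omega>)^2 \<partial>M) = kip \<Psi> d d" using Qp by simp
    then show ?thesis using i by simp
  next
    case False
    then have d0: "{y. d y \<noteq> 0} = {}" by auto
    have "V = (\<lambda>\<omega>. 0)" unfolding Vfun d0 by simp
    moreover have "d = (\<lambda>y. 0)" using False by auto
    ultimately show ?thesis by (simp add: kip_zero_left)
  qed
  then have V2: "integrable M (\<lambda>\<omega>. (V \<omega>)^2)" and EV2: "(\<integral>\<omega>. (V \<omega>)^2 \<partial>M) = kip \<Psi> d d"
    by auto
  have Vint: "integrable M V"
    using L2_prod_integrable[OF Vm borel_measurable_const V2, of 1] by simp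
  have gm: "(\<lambda>z. z x - (\<Sum>k\<in>UNIV. w$k * z (X k))) \<in> borel_measurable (Pi\<^sub>M \<Omega> (\<lambda>_. borel))"
    by (intro borel_measurable_diff borel_measurable_sum borel_measurable_times borel_measurable_const
        measurable_component_singleton[of _ \<Omega> "\<lambda>_. borel", simplified] xO XO[rule_format])
  have indV: "P.indep_var borel V borel (\<epsilon> k)" for k
  proof (rule indep_var_from_set[OF assms(1) assms(14) gm])
    show "V \<omega> = (\<lambda>z. z x - (\<Sum>k\<in>UNIV. w$k * z (X k))) (restrict (\<lambda>y. Z y \<omega>) \<Omega>)" for \<omega>
      using xO XO by (simp add: V_def)
  qed (rule Vm, rule em)
  have VE: "\<forall>k. (\<integral>\<omega>. V \<omega> * \<epsilon> k \<omega> \<partial>M) = 0"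
  proof
    fix k
    have "(\<integral>\<omega>. V \<omega> * \<epsilon> k \<omega> \<partial>M) = (\<integral>\<omega>. V \<omega> \<partial>M) * (\<integral>\<omega>. \<epsilon> k \<omega> \<partial>M)"
      by (rule P.indep_var_lebesgue_integral[OF indV Vint]) (use assms(10) in auto)
    then show "(\<integral>\<omega>. V \<omega> * \<epsilon> k \<omega> \<partial>M) = 0" using assms(10) by simp
  qed
  have rhs_eq: "(Z x \<omega> - gp_pred \<Phi> X \<mu> (\<chi> k. Z (X k) \<omega> + \<epsilon> k \<omega>) x)^2 = (V \<omega> - (\<Sum>k\<in>UNIV. w$k * \<epsilon> k \<omega>))^2" for \<omega>
    unfolding gp V_def by (simp add: sum.distrib algebra_simps)
  have RHS: "(\<integral>\<omega>. (Z x \<omega> - gp_pred \<Phi> X \<mu> (\<chi> k. Z (X k) \<omega> + \<epsilon> k \<omega>) x)^2 \<partial>M) = kip \<Psi> d d + \<sigma>^2 * W"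
  proof -
    have "(\<integral>\<omega>. (Z x \<omega> - gp_pred \<Phi> X \<mu> (\<chi> k. Z (X k) \<omega> + \<epsilon> k \<omega>) x)^2 \<partial>M)
        = (\<integral>\<omega>. (V \<omega> - (\<Sum>k\<in>UNIV. (\<lambda>k. w$k) k * \<epsilon> k \<omega>))^2 \<partial>M)"
      unfolding rhs_eq by simp
    also have "\<dots> = (\<integral>\<omega>. (V \<omega>)^2 \<partial>M) + \<sigma>^2 * (\<Sum>k\<in>UNIV. ((\<lambda>k. w$k) k)^2)"
      by (rule P.second_moment[OF assms(8) assms(10) assms(11) Vm V2 VE])
    also have "\<dots> = kip \<Psi> d d + \<sigma>^2 * W" unfolding W_def EV2 by simp
    finally show ?thesis .
  qed
  obtain c where na: "native_approx \<Psi> \<Omega> c f" using assms(12) unfolding native_space_def by blast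
  have finc: "\<And>j. finite {y. c j y \<noteq> 0}" using na unfolding native_approx_def fin_coeffs_def by auto
  have ptc: "(\<lambda>j. kfun \<Psi> (c j) z) \<longlonglongrightarrow> f z" if "z \<in> \<Omega>" for z
    using na that unfolding native_approx_def by blast
  have kd: "kip \<Psi> d (c j) = kfun \<Psi> (c j) x - (\<Sum>k\<in>UNIV. w$k * kfun \<Psi> (c j) (X k))" for j
    unfolding kip_kfun sd ..
  have l1: "(\<lambda>j. (kip \<Psi> d (c j))^2) \<longlonglongrightarrow> u^2"
    unfolding kd u_def by (intro tendsto_intros ptc xO XO[rule_format])
  have l2: "(\<lambda>j. kip \<Psi> d d * (sqrt (kip \<Psi> (c j) (c j)))^2) \<longlonglongrightarrow> kip \<Psi> d d * (native_norm \<Psi> \<Omega> f)^2"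
    by (intro tendsto_intros native_norm_lim[OF KPsi na])
  have ub: "u^2 \<le> kip \<Psi> d d * (native_norm \<Psi> \<Omega> f)^2"
  proof (rule LIMSEQ_le[OF l1 l2], intro exI allI impI)
    fix j
    show "(kip \<Psi> d (c j))^2 \<le> kip \<Psi> d d * (sqrt (kip \<Psi> (c j) (c j)))^2"
      using kip_cs[OF KPsi fd finc, of j] kip_nonneg[OF KPsi finc, of j] by simp
  qed
  define C where "C = max 1 ((native_norm \<Psi> \<Omega> f)^2)"
  have Q0: "0 \<le> kip \<Psi> d d" by (rule kip_nonneg[OF KPsi fd])
  have sW: "0 \<le> \<sigma>^2 * W" unfolding W_def by (simp add: sum_nonneg)
  have "u^2 \<le> C * kip \<Psi> d d"
  proof -
    have "kip \<Psi> d d * (native_norm \<Psi> \<Omega> f)^2 \<le> kip \<Psi> d d * C"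
      unfolding C_def by (rule mult_left_mono[OF _ Q0]) simp
    then show ?thesis using ub by (simp add: mult.commute)
  qed
  moreover have "\<sigma>^2 * W \<le> C * (\<sigma>^2 * W)"
    using sW unfolding C_def by (simp add: mult_le_cancel_right1)
  ultimately have "u^2 + \<sigma>^2 * W \<le> C * (kip \<Psi> d d + \<sigma>^2 * W)" by (simp add: distrib_left)
  then show ?thesis unfolding LHS RHS C_def .
qed

end
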